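(* Let $G \in \mathbf{Bl}(\mathbf{k},\varphi)$ and let $\mathcal{D}$ be a maximum dissociation set of $G$. Then $G$ is not a graph with maximal spectral radius in $\mathbf{Bl}(\mathbf{k},\varphi)$ if any one of the following holds: (i) $G$ has a block $B$ with $|B\cap\mathcal{D}|=0$; (ii) $\mathcal{D}$ contains a cut vertex of $G$; (iii) $G$ has two adjacent blocks $B_1,B_2$ with $|B_1\cap\mathcal{D}|=|B_2\cap\mathcal{D}|=1$.
   Context: All graphs are finite, simple and connected. A block of $G$ is a maximal connected subgraph without a cut vertex; two blocks are adjacent if they share a cut vertex. A block graph is a connected graph each of whose blocks is a complete graph. A set $\mathcal{D}\subseteq V(G)$ is a dissociation set if the subgraph induced by $\mathcal{D}$ has maximum degree at most $1$; the dissociation number $\varphi(G)$ is the maximum size of a dissociation set, and a maximum dissociation set is one of size $\varphi(G)$ (the paper calls it a "maximal dissociation set"). $\mathbf{Bl}(\mathbf{k},\varphi)$ denotes the class of block graphs on $\mathbf{k}$ vertices with dissociation number $\varphi$. $\rho(G)$ denotes the spectral radius (largest eigenvalue) of the adjacency matrix of $G$. A graph $\widehat G\in\mathbf{Bl}(\mathbf{k},\varphi)$ is called a graph with maximal spectral radius in $\mathbf{Bl}(\mathbf{k},\varphi)$ if $\rho(G)\le\rho(\widehat G)$ for all $G\in\mathbf{Bl}(\mathbf{k},\varphi)$. *)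

theory Defs
  imports Complex_Main
begin

definition simple_graph :: "'a set \<Rightarrow> 'a set set \<Rightarrow> bool" where
  "simple_graph V E \<longleftrightarrow> finite V \<and> (\<forall>e\<in>E. e \<subseteq> V \<and> card e = 2)"

definition adj :: "'a set set \<Rightarrow> 'a \<Rightarrow> 'a \<Rightarrow> bool" where
  "adj E u v \<longleftrightarrow> {u, v} \<in> E"

definition connected_on :: "'a set set \<Rightarrow> 'a set \<Rightarrow> bool" where
  "connected_on E S \<longleftrightarrow> S \<noteq> {} \<and>
     (\<forall>u\<in>S. \<forall>v\<in>S. (\<lambda>x y. x \<in> S \<and> y \<in> S \<and> adj E x y)\<^sup>*\<^sup>* u v)"

definition connected_graph :: "'a set \<Rightarrow> 'a set set \<Rightarrow> bool" where
  "connected_graph V E \<longleftrightarrow> simple_graph V E \<and> connected_on E V"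

definition cut_vertex_on :: "'a set set \<Rightarrow> 'a set \<Rightarrow> 'a \<Rightarrow> bool" where
  "cut_vertex_on E S v \<longleftrightarrow> v \<in> S \<and> S - {v} \<noteq> {} \<and> \<not> connected_on E (S - {v})"

definition nonsep_on :: "'a set set \<Rightarrow> 'a set \<Rightarrow> bool" where
  "nonsep_on E S \<longleftrightarrow> connected_on E S \<and> (\<forall>v\<in>S. \<not> cut_vertex_on E S v)"

definition block :: "'a set \<Rightarrow> 'a set set \<Rightarrow> 'a set \<Rightarrow> bool" where
  "block V E B \<longleftrightarrow> B \<subseteq> V \<and> nonsep_on E B \<and>
     (\<forall>B'. B \<subseteq> B' \<and> B' \<subseteq> V \<and> nonsep_on E B' \<longrightarrow> B' = B)"

definition adjacent_blocks :: "'a set \<Rightarrow> 'a set set \<Rightarrow> 'a set \<Rightarrow> 'a set \<Rightarrow> bool" where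
  "adjacent_blocks V E B1 B2 \<longleftrightarrow> block V E B1 \<and> block V E B2 \<and> B1 \<noteq> B2 \<and>
     (\<exists>v. v \<in> B1 \<and> v \<in> B2 \<and> cut_vertex_on E V v)"

definition block_graph :: "'a set \<Rightarrow> 'a set set \<Rightarrow> bool" where
  "block_graph V E \<longleftrightarrow> connected_graph V E \<and>
     (\<forall>B. block V E B \<longrightarrow> (\<forall>u\<in>B. \<forall>v\<in>B. u \<noteq> v \<longrightarrow> adj E u v))"

definition dissociation_set :: "'a set \<Rightarrow> 'a set set \<Rightarrow> 'a set \<Rightarrow> bool" where
  "dissociation_set V E D \<longleftrightarrow> D \<subseteq> V \<and> (\<forall>v\<in>D. card {u\<in>D. adj E u v} \<le> 1)"

definition dissociation_number :: "'a set \<Rightarrow> 'a set set \<Rightarrow> nat" where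
  "dissociation_number V E = Max (card ` {D. dissociation_set V E D})"

definition max_dissociation_set :: "'a set \<Rightarrow> 'a set set \<Rightarrow> 'a set \<Rightarrow> bool" where
  "max_dissociation_set V E D \<longleftrightarrow> dissociation_set V E D \<and> card D = dissociation_number V E"

definition in_Bl :: "nat \<Rightarrow> nat \<Rightarrow> 'a set \<Rightarrow> 'a set set \<Rightarrow> bool" where
  "in_Bl k \<phi> V E \<longleftrightarrow> block_graph V E \<and> card V = k \<and> dissociation_number V E = \<phi>"

text \<open>Eigenvalues of the adjacency matrix (rows/columns indexed by V), and the spectral radius
  as the largest eigenvalue (the adjacency matrix is real symmetric, so all eigenvalues are real).\<close>
definition adj_eigenvalue :: "'a set \<Rightarrow> 'a set set \<Rightarrow> real \<Rightarrow> bool" where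
  "adj_eigenvalue V E \<mu> \<longleftrightarrow> (\<exists>x :: 'a \<Rightarrow> real. (\<exists>v\<in>V. x v \<noteq> 0) \<and>
     (\<forall>v\<in>V. (\<Sum>u\<in>V. (if adj E u v then 1 else 0) * x u) = \<mu> * x v))"

definition spectral_radius :: "'a set \<Rightarrow> 'a set set \<Rightarrow> real" where
  "spectral_radius V E = Max {\<mu>. adj_eigenvalue V E \<mu>}"

definition max_spectral_in_Bl :: "nat \<Rightarrow> nat \<Rightarrow> 'a set \<Rightarrow> 'a set set \<Rightarrow> bool" where
  "max_spectral_in_Bl k \<phi> V E \<longleftrightarrow> in_Bl k \<phi> V E \<and>
     (\<forall>(V' :: 'a set) E'. in_Bl k \<phi> V' E' \<longrightarrow> spectral_radius V' E' \<le> spectral_radius V E)"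

end

theory Submission
  imports Defs "HOL-Analysis.Analysis" "Jordan_Normal_Form.Char_Poly"
begin

definition aa :: "'a set set \<Rightarrow> 'a \<Rightarrow> 'a \<Rightarrow> real" where
  "aa E u v = (if adj E u v then 1 else 0)"
definition QF :: "'a set \<Rightarrow> 'a set set \<Rightarrow> ('a \<Rightarrow> real) \<Rightarrow> real" where
  "QF V E x = (\<Sum>u\<in>V. \<Sum>w\<in>V. aa E u w * x u * x w)"
definition NF :: "'a set \<Rightarrow> ('a \<Rightarrow> real) \<Rightarrow> real" where
  "NF V x = (\<Sum>v\<in>V. (x v)^2)"

lemma adj_sym: "adj E u v = adj E v u"
  by (simp add: adj_def insert_commute)

lemma aa_sym: "aa E u v = aa E v u"
  by (simp add: aa_def adj_sym)

lemma aa_nonneg: "aa E u v \<ge> 0" by (simp add: aa_def)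

lemma NF_nonneg: "NF V x \<ge> 0" unfolding NF_def by (simp add: sum_nonneg)

lemma NF_pos: assumes "finite V" "v \<in> V" "x v \<noteq> 0" shows "NF V x > 0"
proof -
  have "(x v)^2 \<le> NF V x" unfolding NF_def
    by (rule member_le_sum[of v V "\<lambda>v. (x v)^2"]) (use assms in auto)
  moreover have "(x v)^2 > 0" using assms by simp
  ultimately show ?thesis by linarith
qed

lemma NF_zero: assumes "finite V" "NF V x = 0" "v \<in> V" shows "x v = 0"
  using NF_pos[OF assms(1,3)] assms(2) by force

lemma QF_alt: "QF V E x = (\<Sum>w\<in>V. x w * (\<Sum>u\<in>V. aa E u w * x u))"
  unfolding QF_def
  by (subst sum.swap) (simp add: sum_distrib_left algebra_simps)

lemma eig_QF: assumes "\<forall>v\<in>V. (\<Sum>u\<in>V. (if adj E u v then 1 else 0) * x u) = \<mu> * x v"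
  shows "QF V E x = \<mu> * NF V x"
proof -
  have "QF V E x = (\<Sum>w\<in>V. x w * (\<mu> * x w))"
    unfolding QF_alt using assms by (intro sum.cong) (auto simp: aa_def)
  also have "\<dots> = \<mu> * NF V x" unfolding NF_def
    by (simp add: sum_distrib_left power2_eq_square algebra_simps)
  finally show ?thesis .
qed

lemma quad_le_zero:
  fixes d R :: real
  assumes "\<forall>t. 2 * t * d \<le> R * t^2"
  shows "d = 0"
proof (rule ccontr)
  assume "d \<noteq> 0"
  define t where "t = d / (\<bar>R\<bar> + 1)"
  have pos: "\<bar>R\<bar> + 1 > 0" by simp
  have "2 * t * d \<le> R * t^2" using assms by blast
  also have "\<dots> \<le> \<bar>R\<bar> * t^2" by (simp add: mult_right_mono)
  finally have "2 * t * d \<le> \<bar>R\<bar> * t^2" .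
  hence "2 * t * d * (\<bar>R\<bar> + 1)^2 \<le> \<bar>R\<bar> * t^2 * (\<bar>R\<bar> + 1)^2"
    by (simp add: mult_right_mono)
  moreover have tc: "t * (\<bar>R\<bar> + 1) = d" using pos by (simp add: t_def)
  moreover have "2 * t * d * (\<bar>R\<bar> + 1)^2 = 2 * (d * d) * (\<bar>R\<bar> + 1)"
    unfolding tc[symmetric] by (simp add: power2_eq_square algebra_simps)
  moreover have "\<bar>R\<bar> * t^2 * (\<bar>R\<bar> + 1)^2 = \<bar>R\<bar> * (d * d)"
    unfolding tc[symmetric] by (simp add: power2_eq_square algebra_simps)
  ultimately have "2 * (d * d) * (\<bar>R\<bar> + 1) \<le> \<bar>R\<bar> * (d * d)" by simp
  moreover have "d * d > 0" using \<open>d \<noteq> 0\<close> by (metis not_real_square_gt_zero)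
  ultimately have "2 * (\<bar>R\<bar> + 1) \<le> \<bar>R\<bar>"
    using mult_le_cancel_left_pos[of "d * d" "2 * (\<bar>R\<bar> + 1)" "\<bar>R\<bar>"] by (simp add: algebra_simps)
  thus False by simp
qed

lemma QF_pert:
  assumes "finite V" "v \<in> V"
  shows "QF V E (\<lambda>i. y i + t * (if i = v then 1 else 0)) =
    QF V E y + t * (\<Sum>u\<in>V. aa E u v * y u) + t * (\<Sum>w\<in>V. aa E v w * y w) + t^2 * aa E v v"
proof -
  define d where "d = (\<lambda>i::'a. if i = v then (1::real) else 0)"
  have e: "aa E u w * (y u + t * d u) * (y w + t * d w) =
      aa E u w * y u * y w + t * (aa E u w * y u * d w) + t * (aa E u w * d u * y w) + t^2 * (aa E u w * d u * d w)"
    for u w by (simp add: algebra_simps power2_eq_square)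
  have s1: "(\<Sum>w\<in>V. aa E u w * y u * d w) = aa E u v * y u" for u
  proof -
    have "(\<Sum>w\<in>V. aa E u w * y u * d w) = (\<Sum>w\<in>V. if w = v then aa E u v * y u else 0)"
      by (intro sum.cong) (auto simp: d_def)
    thus ?thesis using assms by simp
  qed
  have s2: "(\<Sum>w\<in>V. aa E u w * d u * y w) = (if u = v then (\<Sum>w\<in>V. aa E v w * y w) else 0)" for u
    by (simp add: d_def)
  have s3: "(\<Sum>w\<in>V. aa E u w * d u * d w) = (if u = v then aa E v v else 0)" for u
  proof -
    have "(\<Sum>w\<in>V. aa E u w * d u * d w) = (\<Sum>w\<in>V. if w = v then (if u = v then aa E v v else 0) else 0)"
      by (intro sum.cong) (auto simp: d_def)
    thus ?thesis using assms by simp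
  qed
  have "QF V E (\<lambda>i. y i + t * d i) = (\<Sum>u\<in>V. \<Sum>w\<in>V. aa E u w * y u * y w + t * (aa E u w * y u * d w) + t * (aa E u w * d u * y w) + t^2 * (aa E u w * d u * d w))"
    unfolding QF_def e ..
  also have "\<dots> = (\<Sum>u\<in>V. (\<Sum>w\<in>V. aa E u w * y u * y w) + t * (aa E u v * y u) + t * (if u = v then (\<Sum>w\<in>V. aa E v w * y w) else 0) + t^2 * (if u = v then aa E v v else 0))"
    by (simp add: sum.distrib sum_distrib_left[symmetric] s1 s2 s3)
  also have "\<dots> = QF V E y + t * (\<Sum>u\<in>V. aa E u v * y u) + t * (\<Sum>w\<in>V. aa E v w * y w) + t^2 * aa E v v"
    using assms by (simp add: sum.distrib sum_distrib_left[symmetric] QF_def)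
  finally show ?thesis unfolding d_def .
qed

lemma NF_pert:
  assumes "finite V" "v \<in> V"
  shows "NF V (\<lambda>i. y i + t * (if i = v then 1 else 0)) = NF V y + 2 * t * y v + t^2"
proof -
  have e: "(y i + t * (if i = v then 1 else 0))^2 = (y i)^2 + (if i = v then 2 * t * y v + t^2 else 0)" for i
    by (simp add: power2_eq_square algebra_simps)
  show ?thesis unfolding NF_def e using assms by (simp add: sum.distrib)
qed

lemma perturb:
  assumes "finite V" "\<forall>x. QF V E x \<le> R * NF V x" "QF V E y = R * NF V y" "v \<in> V"
  shows "(\<Sum>u\<in>V. aa E u v * y u) = R * y v"
proof -
  define s where "s = (\<Sum>u\<in>V. aa E u v * y u)"
  have s': "(\<Sum>w\<in>V. aa E v w * y w) = s" unfolding s_def by (simp add: aa_sym)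
  have "\<forall>t. 2 * t * (s - R * y v) \<le> (R - aa E v v) * t^2"
  proof
    fix t
    have "QF V E (\<lambda>i. y i + t * (if i = v then 1 else 0)) \<le> R * NF V (\<lambda>i. y i + t * (if i = v then 1 else 0))"
      using assms(2) by blast
    thus "2 * t * (s - R * y v) \<le> (R - aa E v v) * t^2"
      unfolding QF_pert[OF assms(1,4)] NF_pert[OF assms(1,4)] s' s_def[symmetric] assms(3)
      by (simp add: algebra_simps)
  qed
  from quad_le_zero[OF this] show ?thesis unfolding s_def by simp
qed

lemma QF_cont: "continuous_on UNIV (QF V E)"
  unfolding QF_def
  by (intro continuous_on_sum continuous_on_mult continuous_on_const continuous_on_product_coordinates)

lemma NF_cont: "continuous_on UNIV (NF V)"
  unfolding NF_def
  by (intro continuous_on_sum continuous_on_power continuous_on_product_coordinates)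

lemma QF_zero: assumes "finite V" "NF V x = 0" shows "QF V E x = 0"
  unfolding QF_def using NF_zero[OF assms(1,2)] by simp

lemma QF_scale: "QF V E (\<lambda>i. x i / c) = QF V E x / c^2"
  unfolding QF_def by (simp add: sum_divide_distrib power2_eq_square)

lemma NF_scale: "NF V (\<lambda>i. x i / c) = NF V x / c^2"
  unfolding NF_def by (simp add: sum_divide_distrib power_divide)

lemma QF_cong: "(\<And>i. i \<in> V \<Longrightarrow> x i = y i) \<Longrightarrow> QF V E x = QF V E y"
  unfolding QF_def by (intro sum.cong) auto

lemma NF_cong: "(\<And>i. i \<in> V \<Longrightarrow> x i = y i) \<Longrightarrow> NF V x = NF V y"
  unfolding NF_def by (intro sum.cong) auto

lemma exists_max_rayleigh:
  fixes V :: "'a set"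
  assumes fin: "finite V" and ne: "V \<noteq> {}"
  shows "\<exists>z. NF V z = 1 \<and> (\<forall>x. QF V E x \<le> QF V E z * NF V x)"
proof -
  define S where "S = (\<lambda>i::'a. if i \<in> V then {-1..1::real} else {0})"
  define K where "K = PiE UNIV S"
  have "compactin (product_topology (\<lambda>i. euclidean) UNIV) K"
    unfolding K_def by (subst compactin_PiE) (auto simp: S_def)
  hence cK: "compact K" by (simp add: euclidean_product_topology)
  have "closed {x. NF V x = 1}"
    by (rule closed_Collect_eq[OF NF_cont continuous_on_const])
  with cK have cS1: "compact (K \<inter> {x. NF V x = 1})" by blast
  obtain v0 where v0: "v0 \<in> V" using ne by blast
  define e0 where "e0 = (\<lambda>i::'a. if i = v0 then (1::real) else 0)"
  have "e0 \<in> K" unfolding K_def S_def e0_def using v0 by (auto simp: PiE_iff)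
  moreover have "NF V e0 = 1"
  proof -
    have "NF V e0 = (\<Sum>i\<in>V. if i = v0 then 1 else 0)" unfolding NF_def e0_def
      by (intro sum.cong) auto
    thus ?thesis using fin v0 by simp
  qed
  ultimately have neS1: "K \<inter> {x. NF V x = 1} \<noteq> {}" by blast
  obtain z where z: "z \<in> K \<inter> {x. NF V x = 1}" and zmax: "\<forall>y\<in>K \<inter> {x. NF V x = 1}. QF V E y \<le> QF V E z"
    using continuous_attains_sup[OF cS1 neS1 continuous_on_subset[OF QF_cont]] by blast
  have "QF V E x \<le> QF V E z * NF V x" for x
  proof (cases "NF V x = 0")
    case True thus ?thesis using QF_zero[OF fin True] by simp
  next
    case False
    hence pos: "NF V x > 0" using NF_nonneg[of V x] by simp
    define c where "c = sqrt (NF V x)"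
    have c2: "c^2 = NF V x" unfolding c_def using pos by simp
    have cpos: "c > 0" unfolding c_def using pos by simp
    define y where "y = (\<lambda>i. if i \<in> V then x i / c else 0)"
    have Ny: "NF V y = 1"
      using NF_cong[of V y "\<lambda>i. x i / c"] NF_scale[of V x c] c2 pos by (simp add: y_def)
    have Qy: "QF V E y = QF V E x / c^2"
      using QF_cong[of V y "\<lambda>i. x i / c"] QF_scale[of V E x c] by (simp add: y_def)
    have "y \<in> K" unfolding K_def S_def
    proof (simp add: PiE_iff, intro allI conjI impI)
      fix i assume i: "i \<in> V"
      have "(y i)^2 \<le> NF V y" unfolding NF_def
        by (rule member_le_sum) (use i fin in auto)
      hence "\<bar>y i\<bar> \<le> 1" using Ny abs_square_le_1 by auto
      thus "- 1 \<le> y i" "y i \<le> 1" by auto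
    next
      fix i assume "i \<notin> V" thus "y i = 0" by (simp add: y_def)
    qed
    with Ny zmax have "QF V E y \<le> QF V E z" by blast
    hence "QF V E x / c^2 \<le> QF V E z" using Qy by simp
    hence "QF V E x \<le> QF V E z * c^2" using cpos by (simp add: divide_le_eq)
    thus ?thesis using c2 by simp
  qed
  thus ?thesis using z by blast
qed

lemma finite_eigs:
  fixes V :: "'a set"
  assumes fin: "finite V"
  shows "finite {\<mu>. adj_eigenvalue V E \<mu>}"
proof -
  define n where "n = card V"
  obtain f where f: "bij_betw f {0..<n} V" using ex_bij_betw_nat_finite[OF fin] n_def by blast
  define M :: "real mat" where "M = mat n n (\<lambda>(i,j). aa E (f j) (f i))"
  have M: "M \<in> carrier_mat n n" unfolding M_def by simp
  have "{\<mu>. adj_eigenvalue V E \<mu>} \<subseteq> {k. poly (char_poly M) k = 0}"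
  proof
    fix \<mu> assume "\<mu> \<in> {\<mu>. adj_eigenvalue V E \<mu>}"
    then obtain x where x0: "\<exists>v\<in>V. x v \<noteq> 0"
      and xe: "\<forall>v\<in>V. (\<Sum>u\<in>V. (if adj E u v then 1 else 0) * x u) = \<mu> * x v"
      unfolding adj_eigenvalue_def by blast
    define w where "w = vec n (\<lambda>i. x (f i))"
    have wc: "w \<in> carrier_vec n" unfolding w_def by simp
    have wnz: "w \<noteq> 0\<^sub>v n"
    proof
      assume w0: "w = 0\<^sub>v n"
      from x0 obtain v where v: "v \<in> V" "x v \<noteq> 0" by blast
      then obtain i where i: "i < n" "f i = v" using f unfolding bij_betw_def by auto
      have "vec_index w i = 0" using w0 i by simp
      thus False using i v unfolding w_def by simp
    qed
    have "M *\<^sub>v w = \<mu> \<cdot>\<^sub>v w"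
    proof (rule eq_vecI)
      show "dim_vec (M *\<^sub>v w) = dim_vec (\<mu> \<cdot>\<^sub>v w)" using M wc by simp
      fix i assume "i < dim_vec (\<mu> \<cdot>\<^sub>v w)"
      hence i: "i < n" using wc by simp
      have fi: "f i \<in> V" using f i unfolding bij_betw_def by auto
      have "vec_index (M *\<^sub>v w) i = (\<Sum>j\<in>{0..<n}. aa E (f j) (f i) * x (f j))"
        using i M unfolding M_def w_def by (simp add: scalar_prod_def)
      also have "\<dots> = (\<Sum>u\<in>V. aa E u (f i) * x u)"
        using sum.reindex_bij_betw[OF f, of "\<lambda>u. aa E u (f i) * x u"] by simp
      also have "\<dots> = \<mu> * x (f i)" using xe fi by (simp add: aa_def)
      also have "\<dots> = vec_index (\<mu> \<cdot>\<^sub>v w) i" using i unfolding w_def by simp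
      finally show "vec_index (M *\<^sub>v w) i = vec_index (\<mu> \<cdot>\<^sub>v w) i" .
    qed
    hence "eigenvector M w \<mu>" unfolding eigenvector_def using M wc wnz by simp
    hence "eigenvalue M \<mu>" unfolding eigenvalue_def by (rule exI)
    thus "\<mu> \<in> {k. poly (char_poly M) k = 0}" using eigenvalue_root_char_poly[OF M] by simp
  qed
  moreover have "char_poly M \<noteq> 0" using degree_monic_char_poly[OF M] by auto
  ultimately show ?thesis by (metis finite_subset poly_roots_finite)
qed

lemma eig_le:
  assumes fin: "finite V" and b: "\<forall>x. QF V E x \<le> R * NF V x" and e: "adj_eigenvalue V E \<mu>"
  shows "\<mu> \<le> R"
proof -
  obtain x v where xv: "v \<in> V" "x v \<noteq> 0"
    and xe: "\<forall>v\<in>V. (\<Sum>u\<in>V. (if adj E u v then 1 else 0) * x u) = \<mu> * x v"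
    using e unfolding adj_eigenvalue_def by blast
  have "QF V E x = \<mu> * NF V x" by (rule eig_QF[OF xe])
  moreover have "QF V E x \<le> R * NF V x" using b by blast
  ultimately have "\<mu> * NF V x \<le> R * NF V x" by simp
  moreover have "NF V x > 0" using NF_pos[of V v x] fin xv by blast
  ultimately show ?thesis by simp
qed

lemma QF_abs: "QF V E x \<le> QF V E (\<lambda>i. \<bar>x i\<bar>)"
  unfolding QF_def
proof (intro sum_mono)
  fix u w
  have "aa E u w * x u * x w \<le> \<bar>aa E u w * x u * x w\<bar>" by simp
  also have "\<dots> = aa E u w * \<bar>x u\<bar> * \<bar>x w\<bar>" using aa_nonneg[of E u w] by (simp add: abs_mult)
  finally show "aa E u w * x u * x w \<le> aa E u w * \<bar>x u\<bar> * \<bar>x w\<bar>" .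
qed

lemma NF_abs: "NF V (\<lambda>i. \<bar>x i\<bar>) = NF V x"
  unfolding NF_def by simp

lemma perron_vec:
  fixes V :: "'a set"
  assumes fin: "finite V" and ne: "V \<noteq> {}"
  shows "\<exists>y. NF V y = 1 \<and> (\<forall>i. y i \<ge> 0) \<and> spectral_radius V E = QF V E y
     \<and> (\<forall>x. QF V E x \<le> spectral_radius V E * NF V x)
     \<and> (\<forall>v\<in>V. (\<Sum>u\<in>V. aa E u v * y u) = spectral_radius V E * y v)"
proof -
  obtain z where z1: "NF V z = 1" and zb: "\<forall>x. QF V E x \<le> QF V E z * NF V x"
    using exists_max_rayleigh[OF fin ne] by blast
  define R where "R = QF V E z"
  define y where "y = (\<lambda>i. \<bar>z i\<bar>)"
  have y1: "NF V y = 1" using z1 NF_abs unfolding y_def by metis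
  have "QF V E y \<le> R * NF V y" using zb R_def by blast
  moreover have "R \<le> QF V E y" unfolding R_def y_def by (rule QF_abs)
  ultimately have Qy: "QF V E y = R * NF V y" using y1 by simp
  have ey: "\<forall>v\<in>V. (\<Sum>u\<in>V. aa E u v * y u) = R * y v"
    using perturb[OF fin _ Qy] zb R_def by blast
  have eigR: "adj_eigenvalue V E R"
  proof -
    have "\<exists>v\<in>V. y v \<noteq> 0"
    proof (rule ccontr)
      assume "\<not> (\<exists>v\<in>V. y v \<noteq> 0)"
      hence "NF V y = 0" unfolding NF_def by simp
      thus False using y1 by simp
    qed
    moreover have "\<forall>v\<in>V. (\<Sum>u\<in>V. (if adj E u v then 1 else 0) * y u) = R * y v"
      using ey by (simp add: aa_def)
    ultimately show ?thesis unfolding adj_eigenvalue_def by blast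
  qed
  have sr: "spectral_radius V E = R"
    unfolding spectral_radius_def
  proof (rule Max_eqI)
    show "finite {\<mu>. adj_eigenvalue V E \<mu>}" by (rule finite_eigs[OF fin])
    show "\<mu> \<le> R" if "\<mu> \<in> {\<mu>. adj_eigenvalue V E \<mu>}" for \<mu>
    proof -
      have "\<forall>x. QF V E x \<le> R * NF V x" using zb R_def by blast
      thus ?thesis using eig_le[OF fin] that by blast
    qed
    show "R \<in> {\<mu>. adj_eigenvalue V E \<mu>}" using eigR by simp
  qed
  have "\<forall>i. y i \<ge> 0" unfolding y_def by simp
  moreover have "\<forall>x. QF V E x \<le> R * NF V x" using zb R_def by blast
  ultimately show ?thesis using y1 sr Qy ey by (intro exI[of _ y]) simp
qed

lemma perron_pos:
  assumes fin: "finite V" and conn: "connected_on E V"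
    and y0: "\<forall>i. y i \<ge> 0" and y1: "NF V y = 1"
    and ey: "\<forall>v\<in>V. (\<Sum>u\<in>V. aa E u v * y u) = R * y v"
  shows "\<forall>v\<in>V. y v > 0"
proof -
  obtain v0 where v0: "v0 \<in> V" "y v0 \<noteq> 0"
  proof (rule ccontr)
    assume "\<not> thesis"
    hence "\<forall>v\<in>V. y v = 0" using that by blast
    hence "NF V y = 0" unfolding NF_def by simp
    thus False using y1 by simp
  qed
  hence yv0: "y v0 > 0" using y0 by (metis less_eq_real_def)
  have stp: "y u > 0" if "y v > 0" "v \<in> V" "u \<in> V" "adj E v u" for u v
  proof -
    have "aa E v u * y v \<le> (\<Sum>w\<in>V. aa E w u * y w)"
      by (rule member_le_sum) (use that fin y0 in \<open>auto simp: aa_def\<close>)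
    hence "y v \<le> R * y u" using ey that by (simp add: aa_def)
    hence "R * y u > 0" using that by simp
    thus ?thesis using y0[rule_format, of u] by (cases "y u = 0") auto
  qed
  have "y v > 0" if "v \<in> V" for v
  proof -
    have "(\<lambda>x y. x \<in> V \<and> y \<in> V \<and> adj E x y)\<^sup>*\<^sup>* v0 v"
      using conn v0 that unfolding connected_on_def by blast
    thus ?thesis
    proof (induction rule: rtranclp_induct)
      case base thus ?case using yv0 .
    next
      case (step a b) thus ?case using stp[of a b] by blast
    qed
  qed
  thus ?thesis by blast
qed

lemma rho_strict:
  fixes V :: "'a set"
  assumes fin: "finite V" and ne: "V \<noteq> {}" and conn: "connected_on E V"
    and sub: "\<forall>u v. adj E u v \<longrightarrow> adj E' u v"
    and pq: "p \<in> V" "q \<in> V" "adj E' p q" "\<not> adj E p q"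
  shows "spectral_radius V E < spectral_radius V E'"
proof -
  obtain y where y1: "NF V y = 1" and y0: "\<forall>i. y i \<ge> 0"
    and sr: "spectral_radius V E = QF V E y"
    and ey: "\<forall>v\<in>V. (\<Sum>u\<in>V. aa E u v * y u) = spectral_radius V E * y v"
    using perron_vec[OF fin ne, of E] by blast
  have pos: "\<forall>v\<in>V. y v > 0" by (rule perron_pos[OF fin conn y0 y1 ey])
  obtain y' where b': "\<forall>x. QF V E' x \<le> spectral_radius V E' * NF V x"
    using perron_vec[OF fin ne, of E'] by blast
  define f where "f = (\<lambda>u w. (aa E' u w - aa E u w) * y u * y w)"
  have fnn: "f u w \<ge> 0" for u w
    unfolding f_def using y0 sub by (auto simp: aa_def)
  have "QF V E' y = QF V E y + (\<Sum>u\<in>V. \<Sum>w\<in>V. f u w)"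
    unfolding QF_def f_def by (simp add: sum.distrib[symmetric] algebra_simps)
  moreover have "f p q \<le> (\<Sum>w\<in>V. f p w)"
    by (rule member_le_sum) (use pq fin fnn in auto)
  moreover have "(\<Sum>w\<in>V. f p w) \<le> (\<Sum>u\<in>V. \<Sum>w\<in>V. f u w)"
    by (rule member_le_sum[of p V "\<lambda>u. \<Sum>w\<in>V. f u w"]) (use pq fin fnn in \<open>auto intro: sum_nonneg\<close>)
  moreover have "f p q > 0" unfolding f_def using pq pos by (simp add: aa_def)
  moreover have "QF V E' y \<le> spectral_radius V E'" using b' y1 by (metis mult.right_neutral)
  ultimately show ?thesis using sr by linarith
qed


definition crel :: "'a set set \<Rightarrow> 'a set \<Rightarrow> 'a \<Rightarrow> 'a \<Rightarrow> bool" where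
  "crel E S = (\<lambda>x y. x \<in> S \<and> y \<in> S \<and> adj E x y)"

lemma adj_sym': "adj E u v = adj E v u"
  by (simp add: adj_def insert_commute)

lemma connected_on_crel: "connected_on E S \<longleftrightarrow> S \<noteq> {} \<and> (\<forall>u\<in>S. \<forall>v\<in>S. (crel E S)\<^sup>*\<^sup>* u v)"
  unfolding connected_on_def crel_def by simp

lemma crel_sym: "(crel E S)\<^sup>*\<^sup>* a b \<Longrightarrow> (crel E S)\<^sup>*\<^sup>* b a"
proof (induction rule: rtranclp_induct)
  case base thus ?case by simp
next
  case (step b c)
  hence "crel E S c b" unfolding crel_def by (simp add: adj_sym')
  thus ?case using step(3) by (rule converse_rtranclp_into_rtranclp)
qed

lemma crel_mono: "S \<subseteq> T \<Longrightarrow> (crel E S)\<^sup>*\<^sup>* a b \<Longrightarrow> (crel E T)\<^sup>*\<^sup>* a b"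
proof -
  assume "S \<subseteq> T"
  hence "crel E S \<le> crel E T" unfolding crel_def by auto
  thus "(crel E S)\<^sup>*\<^sup>* a b \<Longrightarrow> (crel E T)\<^sup>*\<^sup>* a b" using rtranclp_mono by blast
qed

lemma walk_conn:
  "successively (adj E) xs \<Longrightarrow> xs \<noteq> [] \<Longrightarrow> set xs \<subseteq> S \<Longrightarrow> a \<in> set xs \<Longrightarrow> (crel E S)\<^sup>*\<^sup>* (hd xs) a"
proof (induction xs)
  case Nil thus ?case by simp
next
  case (Cons x xs)
  show ?case
  proof (cases "a = x")
    case True thus ?thesis by simp
  next
    case False
    hence a: "a \<in> set xs" using Cons by simp
    hence ne: "xs \<noteq> []" by auto
    have sx: "successively (adj E) xs" using Cons(2) by (cases xs) auto
    have ax: "adj E x (hd xs)" using Cons(2) ne by (cases xs) auto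
    have "(crel E S)\<^sup>*\<^sup>* (hd xs) a" using Cons.IH[OF sx ne _ a] Cons(4) by simp
    moreover have "crel E S x (hd xs)" using ax Cons(4) ne unfolding crel_def by auto
    ultimately show ?thesis by (simp add: converse_rtranclp_into_rtranclp)
  qed
qed

lemma walk_connected:
  assumes "successively (adj E) xs" "xs \<noteq> []"
  shows "connected_on E (set xs)"
  unfolding connected_on_crel
proof (intro conjI ballI)
  show "set xs \<noteq> {}" using assms by simp
  fix u v assume "u \<in> set xs" "v \<in> set xs"
  hence "(crel E (set xs))\<^sup>*\<^sup>* (hd xs) u" "(crel E (set xs))\<^sup>*\<^sup>* (hd xs) v"
    using walk_conn[OF assms] by auto
  thus "(crel E (set xs))\<^sup>*\<^sup>* u v" using crel_sym by (metis rtranclp_trans)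
qed

lemma conn_union:
  assumes "connected_on E S1" "connected_on E S2" "c \<in> S1" "c \<in> S2"
  shows "connected_on E (S1 \<union> S2)"
  unfolding connected_on_crel
proof (intro conjI ballI)
  show "S1 \<union> S2 \<noteq> {}" using assms by auto
  have h: "(crel E (S1 \<union> S2))\<^sup>*\<^sup>* u c" if "u \<in> S1 \<union> S2" for u
  proof (cases "u \<in> S1")
    case True
    thus ?thesis using assms crel_mono[of S1 "S1 \<union> S2" E u c] unfolding connected_on_crel by blast
  next
    case False
    hence "u \<in> S2" using that by blast
    thus ?thesis using assms crel_mono[of S2 "S1 \<union> S2" E u c] unfolding connected_on_crel by blast
  qed
  fix u v assume "u \<in> S1 \<union> S2" "v \<in> S1 \<union> S2"
  thus "(crel E (S1 \<union> S2))\<^sup>*\<^sup>* u v" using h crel_sym by (metis rtranclp_trans)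
qed

lemma nonsep_iff:
  "nonsep_on E S \<longleftrightarrow> connected_on E S \<and> (\<forall>t\<in>S. S - {t} = {} \<or> connected_on E (S - {t}))"
  by (auto simp: nonsep_on_def cut_vertex_on_def)

lemma nonsep_union:
  assumes n1: "nonsep_on E S1" and n2: "nonsep_on E S2"
    and ab: "a \<in> S1" "a \<in> S2" "b \<in> S1" "b \<in> S2" "a \<noteq> b"
  shows "nonsep_on E (S1 \<union> S2)"
  unfolding nonsep_iff
proof (intro conjI ballI)
  show "connected_on E (S1 \<union> S2)"
    using conn_union[of E S1 S2 a] n1 n2 ab unfolding nonsep_iff by blast
  fix t assume "t \<in> S1 \<union> S2"
  have c1: "connected_on E (S1 - {t})"
  proof (cases "t \<in> S1")
    case True
    hence "S1 - {t} \<noteq> {}" using ab by blast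
    thus ?thesis using n1 True unfolding nonsep_iff by blast
  next
    case False thus ?thesis using n1 unfolding nonsep_iff by simp
  qed
  have c2: "connected_on E (S2 - {t})"
  proof (cases "t \<in> S2")
    case True
    hence "S2 - {t} \<noteq> {}" using ab by blast
    thus ?thesis using n2 True unfolding nonsep_iff by blast
  next
    case False thus ?thesis using n2 unfolding nonsep_iff by simp
  qed
  obtain c where c: "c \<in> S1 - {t}" "c \<in> S2 - {t}" using ab by (cases "t = a") auto
  have "connected_on E ((S1 - {t}) \<union> (S2 - {t}))" by (rule conn_union[OF c1 c2 c(1) c(2)])
  moreover have "(S1 - {t}) \<union> (S2 - {t}) = S1 \<union> S2 - {t}" by blast
  ultimately show "S1 \<union> S2 - {t} = {} \<or> connected_on E (S1 \<union> S2 - {t})" by simp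
qed

lemma successively_take_drop:
  assumes "successively P xs"
  shows "successively P (take i xs)" "successively P (drop i xs)"
proof -
  have "successively P (take i xs @ drop i xs)" using assms by simp
  thus "successively P (take i xs)" "successively P (drop i xs)"
    by (simp_all only: successively_append_iff)
qed

lemma cycle_nonsep:
  assumes d: "distinct xs" and s: "successively (adj E) xs" and ne: "xs \<noteq> []"
    and w: "adj E (last xs) (hd xs)"
  shows "nonsep_on E (set xs)"
  unfolding nonsep_iff
proof (intro conjI ballI)
  show "connected_on E (set xs)" by (rule walk_connected[OF s ne])
  fix t assume "t \<in> set xs"
  then obtain i where i: "i < length xs" "xs ! i = t" by (auto simp: in_set_conv_nth)
  have dec: "take i xs @ t # drop (Suc i) xs = xs" using id_take_nth_drop[OF i(1)] i(2) by simp
  have "distinct (take i xs @ t # drop (Suc i) xs)" by (simp only: dec d)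
  hence nt: "t \<notin> set (take i xs)" "t \<notin> set (drop (Suc i) xs)" by auto
  define ys where "ys = drop (Suc i) xs @ take i xs"
  have sy: "set ys = set xs - {t}"
  proof -
    have "set (take i xs @ t # drop (Suc i) xs) = set xs" by (simp only: dec)
    hence "set xs = set (take i xs) \<union> {t} \<union> set (drop (Suc i) xs)" by auto
    thus ?thesis using nt unfolding ys_def by auto
  qed
  show "set xs - {t} = {} \<or> connected_on E (set xs - {t})"
  proof (cases "ys = []")
    case True thus ?thesis using sy by simp
  next
    case False
    have "successively (adj E) ys"
      unfolding ys_def successively_append_iff
    proof (intro conjI)
      show "successively (adj E) (drop (Suc i) xs)" "successively (adj E) (take i xs)"
        using successively_take_drop[OF s] by auto
      show "drop (Suc i) xs = [] \<or> take i xs = [] \<or> adj E (last (drop (Suc i) xs)) (hd (take i xs))"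
      proof (cases "drop (Suc i) xs = [] \<or> take i xs = []")
        case False
        hence "last (drop (Suc i) xs) = last xs" by simp
        moreover have "hd (take i xs) = hd xs" using False by (simp add: hd_take)
        ultimately show ?thesis using w by simp
      qed auto
    qed
    thus ?thesis using walk_connected[of E ys] False sy by simp
  qed
qed

lemma shorten:
  "successively R xs \<Longrightarrow> xs \<noteq> [] \<Longrightarrow> \<exists>ys. distinct ys \<and> successively R ys \<and> ys \<noteq> [] \<and>
     hd ys = hd xs \<and> last ys = last xs \<and> set ys \<subseteq> set xs"
proof (induction "length xs" arbitrary: xs rule: less_induct)
  case less
  show ?case
  proof (cases "distinct xs")
    case True thus ?thesis using less by blast
  next
    case False
    then obtain as y bs cs where xs: "xs = as @ [y] @ bs @ [y] @ cs"
      using not_distinct_decomp by blast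
    define xs' where "xs' = as @ [y] @ cs"
    have len: "length xs' < length xs" unfolding xs xs'_def by simp
    have h1: "successively R (as @ [y])" using less(2) unfolding xs
      using successively_append_iff[of R "as @ [y]" "bs @ [y] @ cs"] by simp
    have h2: "successively R (y # cs)" using less(2) unfolding xs
      using successively_append_iff[of R "as @ [y] @ bs" "y # cs"] by simp
    have s': "successively R xs'" unfolding xs'_def
      using h1 h2 successively_append_iff[of R "as @ [y]" cs] by (cases cs) auto
    have ne': "xs' \<noteq> []" unfolding xs'_def by simp
    obtain ys where ys: "distinct ys \<and> successively R ys \<and> ys \<noteq> [] \<and>
      hd ys = hd xs' \<and> last ys = last xs' \<and> set ys \<subseteq> set xs'"
      using less(1)[OF len s' ne'] by blast
    have "hd xs' = hd xs" "last xs' = last xs" "set xs' \<subseteq> set xs"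
      unfolding xs xs'_def by (auto simp: hd_append)
    thus ?thesis using ys by (intro exI[of _ ys]) auto
  qed
qed

lemma rtranclp_walk:
  "(crel E S)\<^sup>*\<^sup>* a b \<Longrightarrow> a \<in> S \<Longrightarrow>
   \<exists>xs. xs \<noteq> [] \<and> hd xs = a \<and> last xs = b \<and> successively (adj E) xs \<and> set xs \<subseteq> S"
proof (induction rule: rtranclp_induct)
  case base thus ?case by (intro exI[of _ "[a]"]) simp
next
  case (step b c)
  then obtain xs where xs: "xs \<noteq> []" "hd xs = a" "last xs = b" "successively (adj E) xs" "set xs \<subseteq> S"
    by blast
  have "crel E S b c" by fact
  hence bc: "adj E b c" "c \<in> S" unfolding crel_def by auto
  show ?case
    by (intro exI[of _ "xs @ [c]"]) (use xs bc in \<open>auto simp: successively_append_iff\<close>)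
qed

lemma first_hit:
  "successively P xs \<Longrightarrow> xs \<noteq> [] \<Longrightarrow> hd xs \<notin> W \<Longrightarrow> last xs \<in> W \<Longrightarrow>
   \<exists>ys. ys \<noteq> [] \<and> hd ys = hd xs \<and> last ys \<in> W \<and> successively (\<lambda>p q. p \<notin> W \<and> P p q) ys
      \<and> set ys \<subseteq> set xs \<and> (\<forall>z\<in>set ys. z \<notin> W \<or> z = last ys) \<and> length ys \<ge> 2"
proof (induction xs)
  case Nil thus ?case by simp
next
  case (Cons x xs)
  have xs: "xs \<noteq> []" using Cons by auto
  have sx: "successively P xs" using Cons(2) by (cases xs) auto
  have px: "P x (hd xs)" using Cons(2) xs by (cases xs) auto
  show ?case
  proof (cases "hd xs \<in> W")
    case True
    show ?thesis
      by (intro exI[of _ "[x, hd xs]"]) (use True Cons(4) px xs in auto)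
  next
    case False
    have "last xs \<in> W" using Cons(5) xs by simp
    then obtain ys where ys: "ys \<noteq> []" "hd ys = hd xs" "last ys \<in> W"
      "successively (\<lambda>p q. p \<notin> W \<and> P p q) ys" "set ys \<subseteq> set xs"
      "\<forall>z\<in>set ys. z \<notin> W \<or> z = last ys" "length ys \<ge> 2"
      using Cons.IH[OF sx xs False] by blast
    show ?thesis
      by (intro exI[of _ "x # ys"]) (use ys Cons(4) px in \<open>auto simp: successively_Cons\<close>)
  qed
qed

lemma simple_adj: "simple_graph V E \<Longrightarrow> adj E u w \<Longrightarrow> u \<noteq> w \<and> u \<in> V \<and> w \<in> V"
proof -
  assume sg: "simple_graph V E" and a: "adj E u w"
  hence h: "{u, w} \<subseteq> V" "card {u, w} = 2" unfolding simple_graph_def adj_def by auto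
  have "u \<noteq> w" proof assume "u = w" thus False using h(2) by simp qed
  thus ?thesis using h(1) by simp
qed

lemma nonsep_ne: "nonsep_on E S \<Longrightarrow> S \<noteq> {}"
  unfolding nonsep_on_def connected_on_def by simp

lemma nonsep_in_block:
  assumes fin: "finite V" and S: "S \<subseteq> V" "nonsep_on E S"
  shows "\<exists>B. block V E B \<and> S \<subseteq> B"
proof -
  define C where "C = {T. S \<subseteq> T \<and> T \<subseteq> V \<and> nonsep_on E T}"
  have "C \<subseteq> Pow V" unfolding C_def by auto
  hence fC: "finite C" using fin finite_subset by blast
  have SC: "S \<in> C" unfolding C_def using S by simp
  define m where "m = Max (card ` C)"
  have "m \<in> card ` C" unfolding m_def using fC SC by (intro Max_in) auto
  then obtain B where B: "B \<in> C" "card B = m" by blast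
  have mx: "card T \<le> card B" if "T \<in> C" for T
    using B(2) fC that unfolding m_def by simp
  have "block V E B" unfolding block_def
  proof (intro conjI allI impI)
    show "B \<subseteq> V" "nonsep_on E B" using B unfolding C_def by auto
    fix B' assume h: "B \<subseteq> B' \<and> B' \<subseteq> V \<and> nonsep_on E B'"
    hence "B' \<in> C" using B unfolding C_def by auto
    hence "card B' \<le> card B" by (rule mx)
    moreover have "finite B'" using h fin finite_subset by blast
    ultimately show "B' = B" using h card_seteq by blast
  qed
  thus ?thesis using B unfolding C_def by blast
qed

lemma bg_facts: "block_graph V E \<Longrightarrow> finite V \<and> simple_graph V E \<and> connected_on E V"
  unfolding block_graph_def connected_graph_def simple_graph_def by blast

lemma bg_clique:
  assumes bg: "block_graph V E" and S: "S \<subseteq> V" "nonsep_on E S" and uw: "u \<in> S" "w \<in> S" "u \<noteq> w"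
  shows "adj E u w"
proof -
  obtain B where "block V E B" "S \<subseteq> B" using nonsep_in_block[OF _ S] bg_facts[OF bg] by blast
  thus ?thesis using bg uw unfolding block_graph_def by blast
qed

lemma edge_nonsep: "adj E u w \<Longrightarrow> u \<noteq> w \<Longrightarrow> nonsep_on E {u, w}"
  using cycle_nonsep[of "[u, w]" E] by (simp add: adj_sym')

lemma block_sub: "block V E B \<Longrightarrow> B \<subseteq> V" unfolding block_def by blast
lemma block_nonsep: "block V E B \<Longrightarrow> nonsep_on E B" unfolding block_def by blast

lemma cyc_block:
  assumes B: "block V E B" and d: "distinct xs" and s: "successively (adj E) xs" and ne: "xs \<noteq> []"
    and w: "adj E (last xs) (hd xs)" and V: "set xs \<subseteq> V"
    and ab: "a \<in> set xs" "b \<in> set xs" "a \<in> B" "b \<in> B" "a \<noteq> b"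
  shows "set xs \<subseteq> B"
proof -
  have "nonsep_on E (set xs \<union> B)"
    using nonsep_union[OF cycle_nonsep[OF d s ne w] block_nonsep[OF B]] ab by blast
  moreover have "set xs \<union> B \<subseteq> V" using V block_sub[OF B] by blast
  ultimately have "set xs \<union> B = B" using B unfolding block_def by blast
  thus ?thesis by blast
qed

lemma block_two:
  assumes b1: "block V E B1" and b2: "block V E B2" and ab: "a \<in> B1" "a \<in> B2" "b \<in> B1" "b \<in> B2" "a \<noteq> b"
  shows "B1 = B2"
proof -
  have n: "nonsep_on E (B1 \<union> B2)"
    using nonsep_union[OF block_nonsep[OF b1] block_nonsep[OF b2]] ab by blast
  have s: "B1 \<union> B2 \<subseteq> V" using block_sub[OF b1] block_sub[OF b2] by blast
  have "B1 \<union> B2 = B1" using b1 n s unfolding block_def by blast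
  moreover have "B1 \<union> B2 = B2" using b2 n s unfolding block_def by blast
  ultimately show ?thesis by simp
qed

lemma block_notsub:
  assumes b1: "block V E B1" and b2: "block V E B2" and ne: "B1 \<noteq> B2"
  shows "\<exists>x\<in>B1. x \<notin> B2"
proof (rule ccontr)
  assume "\<not> ?thesis"
  hence "B1 \<subseteq> B2" by blast
  hence "B2 = B1" using b1 b2 unfolding block_def by blast
  thus False using ne by simp
qed

definition merge :: "'a set set \<Rightarrow> 'a set \<Rightarrow> 'a set \<Rightarrow> 'a set set" where
  "merge E B1 B2 = E \<union> {{x, y} | x y. x \<in> B1 \<and> y \<in> B2 \<and> x \<noteq> y}"

lemma adj_merge:
  "adj (merge E B1 B2) x y \<longleftrightarrow> adj E x y \<or> (x \<noteq> y \<and> (x \<in> B1 \<and> y \<in> B2 \<or> y \<in> B1 \<and> x \<in> B2))"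
  unfolding adj_def merge_def by (auto simp: doubleton_eq_iff)

lemma transfer_conn:
  assumes "\<forall>a\<in>S. \<forall>b\<in>S. adj E a b \<longleftrightarrow> adj E' a b" "T \<subseteq> S"
  shows "connected_on E T \<longleftrightarrow> connected_on E' T"
proof -
  have "crel E T = crel E' T" unfolding crel_def using assms by (intro ext) blast
  thus ?thesis unfolding connected_on_crel by simp
qed

lemma transfer_nonsep:
  assumes "\<forall>a\<in>S. \<forall>b\<in>S. adj E a b \<longleftrightarrow> adj E' a b"
  shows "nonsep_on E S \<longleftrightarrow> nonsep_on E' S"
proof -
  have "connected_on E S \<longleftrightarrow> connected_on E' S" using transfer_conn[OF assms] by blast
  moreover have "connected_on E (S - {t}) \<longleftrightarrow> connected_on E' (S - {t})" for t
    using transfer_conn[OF assms] by blast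
  ultimately show ?thesis unfolding nonsep_iff by simp
qed

lemma merge_K:
  assumes bg: "block_graph V E" and b1: "block V E B1" and b2: "block V E B2"
    and v: "v \<in> B1" "v \<in> B2"
    and S: "S \<subseteq> V" "nonsep_on (merge E B1 B2) S"
    and x: "x \<in> S" "x \<notin> B1 \<union> B2"
    and ab: "a \<in> S" "a \<in> B1 \<union> B2" "b \<in> S" "b \<in> B1 \<union> B2" "a \<noteq> b"
  shows False
proof -
  define W where "W = B1 \<union> B2"
  define E' where "E' = merge E B1 B2"
  define RW where "RW = (\<lambda>p q. adj E p q \<and> (p \<notin> W \<or> q \<notin> W))"
  have RWs: "RW p q = RW q p" for p q unfolding RW_def by (auto simp: adj_sym')
  have E'W: "adj E p q" if "adj E' p q" "p \<notin> W" for p q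
    using that unfolding E'_def W_def adj_merge by auto
  have fin: "finite V" using bg_facts[OF bg] by blast
  have "connected_on E' (S - {a})"
    using S(2) ab(1) x(1) unfolding nonsep_iff E'_def
    by (metis Diff_iff empty_iff insertE x(2) ab(2))
  hence "(crel E' (S - {a}))\<^sup>*\<^sup>* x b"
    using x ab unfolding connected_on_crel by (metis Diff_iff singletonD)
  then obtain xs1 where xs1: "xs1 \<noteq> []" "hd xs1 = x" "last xs1 = b" "successively (adj E') xs1" "set xs1 \<subseteq> S - {a}"
    using rtranclp_walk[of E' "S - {a}" x b] x ab by (metis Diff_iff singletonD)
  obtain ys1 where ys1: "ys1 \<noteq> []" "hd ys1 = x" "last ys1 \<in> W"
    "successively (\<lambda>p q. p \<notin> W \<and> adj E' p q) ys1" "set ys1 \<subseteq> set xs1"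
    "\<forall>z\<in>set ys1. z \<notin> W \<or> z = last ys1" "length ys1 \<ge> 2"
    using first_hit[OF xs1(4) xs1(1), of W] xs1 x ab unfolding W_def by auto
  define w1 where "w1 = last ys1"
  have "w1 \<in> set ys1" unfolding w1_def using ys1(1) by simp
  hence "w1 \<in> S - {a}" using ys1(5) xs1(5) by blast
  hence w1: "w1 \<in> S" "w1 \<noteq> a" "w1 \<in> W" using ys1(3) unfolding w1_def by auto
  have "connected_on E' (S - {w1})"
    using S(2) w1 x(1) unfolding nonsep_iff E'_def W_def
    by (metis Diff_iff empty_iff insertE x(2))
  hence "(crel E' (S - {w1}))\<^sup>*\<^sup>* x a"
    using x ab w1 unfolding connected_on_crel W_def by (metis Diff_iff singletonD)
  then obtain xs2 where xs2: "xs2 \<noteq> []" "hd xs2 = x" "last xs2 = a" "successively (adj E') xs2" "set xs2 \<subseteq> S - {w1}"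
    using rtranclp_walk[of E' "S - {w1}" x a] x w1 unfolding W_def by (metis Diff_iff singletonD)
  obtain ys2 where ys2: "ys2 \<noteq> []" "hd ys2 = x" "last ys2 \<in> W"
    "successively (\<lambda>p q. p \<notin> W \<and> adj E' p q) ys2" "set ys2 \<subseteq> set xs2"
    "\<forall>z\<in>set ys2. z \<notin> W \<or> z = last ys2" "length ys2 \<ge> 2"
    using first_hit[OF xs2(4) xs2(1), of W] xs2 x ab unfolding W_def by auto
  define w2 where "w2 = last ys2"
  have "w2 \<in> set ys2" unfolding w2_def using ys2(1) by simp
  hence "w2 \<in> S - {w1}" using ys2(5) xs2(5) by blast
  hence w2: "w2 \<in> S" "w2 \<noteq> w1" "w2 \<in> W" using ys2(3) unfolding w2_def by auto
  have sRW1: "successively RW ys1"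
    using ys1(4) by (rule successively_mono) (auto simp: RW_def intro: E'W)
  have sRW2: "successively RW ys2"
    using ys2(4) by (rule successively_mono) (auto simp: RW_def intro: E'W)
  obtain ys2' where ys2e: "ys2 = x # ys2'" using ys2(1,2) by (cases ys2) auto
  have ne2': "ys2' \<noteq> []" using ys2(7) ys2e by auto
  have s2': "successively RW ys2'" and j: "RW x (hd ys2')"
    using sRW2 ne2' unfolding ys2e by (cases ys2', simp, simp)+
  define zs where "zs = rev ys1 @ ys2'"
  have szs: "successively RW zs"
    unfolding zs_def successively_append_iff
  proof (intro conjI)
    show "successively RW (rev ys1)" using sRW1 RWs by (simp add: RWs)
    show "successively RW ys2'" by (rule s2')
    have "last (rev ys1) = x" using ys1(1,2) by (simp add: last_rev)
    thus "rev ys1 = [] \<or> ys2' = [] \<or> RW (last (rev ys1)) (hd ys2')" using j by simp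
  qed
  have zsne: "zs \<noteq> []" unfolding zs_def using ys1 by simp
  have hz: "hd zs = w1" unfolding zs_def w1_def using ys1(1) by (simp add: hd_rev)
  have lz: "last zs = w2" unfolding zs_def w2_def ys2e using ne2' by simp
  have setz: "set zs \<subseteq> S" unfolding zs_def using ys1 ys2 xs1 xs2 ys2e by auto
  have setzW: "\<forall>z\<in>set zs. z \<notin> W \<or> z = w1 \<or> z = w2"
    unfolding zs_def w1_def w2_def using ys1(6) ys2(6) ys2e by auto
  obtain ps where ps: "distinct ps" "successively RW ps" "ps \<noteq> []" "hd ps = w1" "last ps = w2" "set ps \<subseteq> set zs"
    using shorten[OF szs zsne] hz lz by blast
  obtain p0 p1 rest where pse: "ps = p0 # p1 # rest"
  proof (cases ps)
    case Nil thus ?thesis using ps by simp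
  next
    case (Cons p0 r)
    show ?thesis
    proof (cases r)
      case Nil thus ?thesis using ps Cons w2 by simp
    next
      case (Cons p1 rest) thus ?thesis using \<open>ps = p0 # r\<close> that by blast
    qed
  qed
  have "RW p0 p1" using ps(2) pse by simp
  then obtain z0 where z0: "z0 \<in> set ps" "z0 \<notin> W" unfolding RW_def using pse by auto
  have sps: "successively (adj E) ps" using ps(2) by (rule successively_mono) (simp add: RW_def)
  have psV: "set ps \<subseteq> V" using ps(6) setz S(1) by blast
  have psW: "\<forall>z\<in>set ps. z \<notin> W \<or> z = w1 \<or> z = w2" using ps(6) setzW by blast
  have w1p: "w1 \<in> set ps" using ps(3,4) hd_in_set by metis
  have w2p: "w2 \<in> set ps" using ps(3,5) last_in_set by metis
  have B12: "block V E B" if "B \<in> {B1, B2}" for B using that b1 b2 by auto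
  have cl: "adj E p q" if "B \<in> {B1, B2}" "p \<in> B" "q \<in> B" "p \<noteq> q" for B p q
    using bg_clique[OF bg block_sub[OF B12[OF that(1)]] block_nonsep[OF B12[OF that(1)]]] that by blast
  obtain Bw1 where Bw1: "Bw1 \<in> {B1, B2}" "w1 \<in> Bw1" using w1 unfolding W_def by blast
  obtain Bw2 where Bw2: "Bw2 \<in> {B1, B2}" "w2 \<in> Bw2" using w2 unfolding W_def by blast
  have inW: "Bw1 \<subseteq> W" "Bw2 \<subseteq> W" using Bw1 Bw2 unfolding W_def by auto
  have one: False if "B \<in> {B1, B2}" "w1 \<in> B" "w2 \<in> B" for B
  proof -
    have "adj E (last ps) (hd ps)" using cl[OF that(1) that(3) that(2)] w2 ps by simp
    hence "set ps \<subseteq> B" using cyc_block[OF B12[OF that(1)] ps(1) sps ps(3) _ psV w1p w2p that(2,3)] w2 by auto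
    moreover have "B \<subseteq> W" using that(1) unfolding W_def by auto
    ultimately show False using z0 by blast
  qed
  show False
  proof (cases "w2 \<in> Bw1 \<or> w1 \<in> Bw2")
    case True thus False using one Bw1 Bw2 by blast
  next
    case False
    have vB: "v \<in> Bw1" "v \<in> Bw2" using Bw1 Bw2 v by auto
    have vw: "v \<noteq> w1" "v \<noteq> w2" using False vB by auto
    have vnp: "v \<notin> set ps" using psW vw v unfolding W_def by blast
    define cs where "cs = ps @ [v]"
    have dcs: "distinct cs" unfolding cs_def using ps(1) vnp by simp
    have scs: "successively (adj E) cs" unfolding cs_def successively_append_iff
      using sps cl[OF Bw2(1) Bw2(2) vB(2)] vw ps(5) by auto
    have wcs: "adj E (last cs) (hd cs)" unfolding cs_def using cl[OF Bw1(1) vB(1) Bw1(2)] vw ps(3,4) by simp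
    have vV: "v \<in> V" using v(1) block_sub[OF b1] by blast
    have csV: "set cs \<subseteq> V" unfolding cs_def using psV vV by auto
    have csne: "cs \<noteq> []" unfolding cs_def by simp
    have "w1 \<in> set cs" "v \<in> set cs" unfolding cs_def using w1p by auto
    hence "set cs \<subseteq> Bw1"
      using cyc_block[OF B12[OF Bw1(1)] dcs scs csne wcs csV, of w1 v] Bw1(2) vB(1) vw(1) by auto
    thus False using z0 inW unfolding cs_def by auto
  qed
qed

lemma merge_bg:
  assumes bg: "block_graph V E" and b1: "block V E B1" and b2: "block V E B2"
    and v: "v \<in> B1" "v \<in> B2"
  shows "block_graph V (merge E B1 B2)"
proof -
  define E' where "E' = merge E B1 B2"
  have fin: "finite V" and sg: "simple_graph V E" and cV: "connected_on E V" using bg_facts[OF bg] by auto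
  have B1V: "B1 \<subseteq> V" and B2V: "B2 \<subseteq> V" using block_sub b1 b2 by auto
  have sg': "simple_graph V E'"
  proof -
    have "\<forall>e\<in>E'. e \<subseteq> V \<and> card e = 2"
    proof
    fix e assume "e \<in> E'"
    hence "e \<in> E \<or> (\<exists>x y. e = {x, y} \<and> x \<in> B1 \<and> y \<in> B2 \<and> x \<noteq> y)" unfolding E'_def merge_def by blast
    thus "e \<subseteq> V \<and> card e = 2"
    proof
      assume "e \<in> E" thus ?thesis using sg unfolding simple_graph_def by blast
    next
      assume "\<exists>x y. e = {x, y} \<and> x \<in> B1 \<and> y \<in> B2 \<and> x \<noteq> y"
      thus ?thesis using B1V B2V by auto
    qed
    qed
    thus ?thesis using fin unfolding simple_graph_def by blast
  qed
  have mono: "adj E p q \<Longrightarrow> adj E' p q" for p q unfolding E'_def adj_merge by simp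
  have cV': "connected_on E' V"
  proof -
    have "crel E V \<le> crel E' V" unfolding crel_def using mono by auto
    hence "(crel E V)\<^sup>*\<^sup>* \<le> (crel E' V)\<^sup>*\<^sup>*" by (rule rtranclp_mono)
    thus ?thesis using cV unfolding connected_on_crel by blast
  qed
  have cl: "adj E p q" if "B \<in> {B1, B2}" "p \<in> B" "q \<in> B" "p \<noteq> q" for B p q
  proof -
    have bB: "block V E B" using that(1) b1 b2 by auto
    show ?thesis using bg_clique[OF bg block_sub[OF bB] block_nonsep[OF bB] that(2-4)] .
  qed
  have "\<forall>u\<in>S. \<forall>w\<in>S. u \<noteq> w \<longrightarrow> adj E' u w" if S: "S \<subseteq> V" "nonsep_on E' S" for S
  proof (cases "S \<subseteq> B1 \<union> B2")
    case True
    show ?thesis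
    proof (intro ballI impI)
      fix u w assume uw: "u \<in> S" "w \<in> S" "u \<noteq> w"
      show "adj E' u w"
      proof (cases "(u \<in> B1 \<and> w \<in> B1) \<or> (u \<in> B2 \<and> w \<in> B2)")
        case True
        hence "adj E u w" using cl[of B1 u w] cl[of B2 u w] uw by auto
        thus ?thesis using mono by blast
      next
        case False thus ?thesis using True uw unfolding E'_def adj_merge by blast
      qed
    qed
  next
    case False
    then obtain x where x: "x \<in> S" "x \<notin> B1 \<union> B2" by blast
    show ?thesis
    proof (cases "\<exists>a b. a \<in> S \<and> a \<in> B1 \<union> B2 \<and> b \<in> S \<and> b \<in> B1 \<union> B2 \<and> a \<noteq> b")
      case True
      then obtain a b where "a \<in> S" "a \<in> B1 \<union> B2" "b \<in> S" "b \<in> B1 \<union> B2" "a \<noteq> b" by blast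
      from merge_K[OF bg b1 b2 v S(1) S(2)[unfolded E'_def] x this] show ?thesis by blast
    next
      case False
      have tr: "\<forall>a\<in>S. \<forall>b\<in>S. adj E a b \<longleftrightarrow> adj E' a b"
      proof (intro ballI iffI)
        fix a b assume "a \<in> S" "b \<in> S" "adj E a b" thus "adj E' a b" using mono by blast
      next
        fix a b assume ab: "a \<in> S" "b \<in> S" "adj E' a b"
        thus "adj E a b" using False unfolding E'_def adj_merge by blast
      qed
      have nS: "nonsep_on E S" using transfer_nonsep[OF tr] S(2) by simp
      show ?thesis
      proof (intro ballI impI)
        fix u w assume "u \<in> S" "w \<in> S" "u \<noteq> w"
        thus "adj E' u w" using bg_clique[OF bg S(1) nS] mono by blast
      qed
    qed
  qed
  hence "\<forall>B. block V E' B \<longrightarrow> (\<forall>u\<in>B. \<forall>w\<in>B. u \<noteq> w \<longrightarrow> adj E' u w)"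
    using block_sub block_nonsep by metis
  thus ?thesis unfolding block_graph_def connected_graph_def E'_def[symmetric] using sg' cV' by blast
qed

lemma merge_new:
  assumes bg: "block_graph V E" and b1: "block V E B1" and b2: "block V E B2" and ne: "B1 \<noteq> B2"
    and v: "v \<in> B1" "v \<in> B2"
  shows "\<exists>p q. p \<in> V \<and> q \<in> V \<and> adj (merge E B1 B2) p q \<and> \<not> adj E p q"
proof -
  obtain x where x: "x \<in> B1" "x \<notin> B2" using block_notsub[OF b1 b2 ne] by blast
  obtain y where y: "y \<in> B2" "y \<notin> B1" using block_notsub[OF b2 b1] ne by metis
  have B1V: "B1 \<subseteq> V" and B2V: "B2 \<subseteq> V" using block_sub b1 b2 by auto
  have cl: "adj E p q" if "B \<in> {B1, B2}" "p \<in> B" "q \<in> B" "p \<noteq> q" for B p q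
  proof -
    have bB: "block V E B" using that(1) b1 b2 by auto
    show ?thesis using bg_clique[OF bg block_sub[OF bB] block_nonsep[OF bB] that(2-4)] .
  qed
  have xy: "x \<noteq> y" "x \<noteq> v" "y \<noteq> v" using x y v by auto
  have "\<not> adj E x y"
  proof
    assume a: "adj E x y"
    have s: "successively (adj E) [x, v, y]" using cl[of B1 x v] cl[of B2 v y] x y v xy by simp
    have w: "adj E (last [x, v, y]) (hd [x, v, y])" using a by (simp add: adj_sym')
    have d: "distinct [x, v, y]" using xy by auto
    have "set [x, v, y] \<subseteq> B1"
      by (rule cyc_block[OF b1 d s _ w, of x v]) (use xy x v B1V B2V y in auto)
    thus False using y by simp
  qed
  moreover have "adj (merge E B1 B2) x y" unfolding adj_merge using x y xy by blast
  ultimately show ?thesis using x y B1V B2V by blast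
qed


lemma diss_mono:
  assumes fin: "finite V" and m: "\<forall>p q. adj E p q \<longrightarrow> adj E' p q" and d: "dissociation_set V E' X"
  shows "dissociation_set V E X"
  unfolding dissociation_set_def
proof (intro conjI ballI)
  show "X \<subseteq> V" using d unfolding dissociation_set_def by blast
  fix w assume w: "w \<in> X"
  have "finite X" using d fin finite_subset unfolding dissociation_set_def by blast
  hence "card {u \<in> X. adj E u w} \<le> card {u \<in> X. adj E' u w}" using m by (intro card_mono) auto
  also have "\<dots> \<le> 1" using d w unfolding dissociation_set_def by blast
  finally show "card {u \<in> X. adj E u w} \<le> 1" .
qed

lemma diss_fin: "finite V \<Longrightarrow> finite {X. dissociation_set V E X}"
  unfolding dissociation_set_def by (rule finite_subset[of _ "Pow V"]) auto

lemma dn_ge: "finite V \<Longrightarrow> dissociation_set V E X \<Longrightarrow> card X \<le> dissociation_number V E"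
  unfolding dissociation_number_def using diss_fin by (intro Max_ge) auto

lemma dn_eq:
  assumes fin: "finite V" and m: "\<forall>p q. adj E p q \<longrightarrow> adj E' p q"
    and d: "dissociation_set V E' D" and c: "card D = dissociation_number V E"
  shows "dissociation_number V E' = dissociation_number V E"
proof (rule antisym)
  have "card ` {X. dissociation_set V E' X} \<subseteq> card ` {X. dissociation_set V E X}"
    using diss_mono[OF fin m] by blast
  thus "dissociation_number V E' \<le> dissociation_number V E"
    unfolding dissociation_number_def using d diss_fin[OF fin]
    by (intro Max_mono) auto
  show "dissociation_number V E \<le> dissociation_number V E'" using dn_ge[OF fin d] c by simp
qed

lemma final_merge:
  assumes inbl: "in_Bl k \<phi> V E" and md: "max_dissociation_set V E D"
    and b1: "block V E B1" and b2: "block V E B2" and ne: "B1 \<noteq> B2" and v: "v \<in> B1" "v \<in> B2"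
    and dd: "dissociation_set V (merge E B1 B2) D"
  shows "\<not> max_spectral_in_Bl k \<phi> V E"
proof
  assume ms: "max_spectral_in_Bl k \<phi> V E"
  define E' where "E' = merge E B1 B2"
  have bg: "block_graph V E" and kV: "card V = k" and ph: "dissociation_number V E = \<phi>"
    using inbl unfolding in_Bl_def by auto
  have fin: "finite V" and cV: "connected_on E V" using bg_facts[OF bg] by auto
  have Vne: "V \<noteq> {}" using cV unfolding connected_on_def by blast
  have m: "\<forall>p q. adj E p q \<longrightarrow> adj E' p q" unfolding E'_def adj_merge by simp
  have bg': "block_graph V E'" unfolding E'_def by (rule merge_bg[OF bg b1 b2 v])
  have "dissociation_number V E' = \<phi>"
    using dn_eq[OF fin m dd[folded E'_def]] md ph unfolding max_dissociation_set_def by simp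
  hence inbl': "in_Bl k \<phi> V E'" using bg' kV unfolding in_Bl_def by simp
  obtain p q where pq: "p \<in> V" "q \<in> V" "adj E' p q" "\<not> adj E p q"
    using merge_new[OF bg b1 b2 ne v] unfolding E'_def by blast
  have "spectral_radius V E < spectral_radius V E'"
    by (rule rho_strict[OF fin Vne cV m pq])
  moreover have "spectral_radius V E' \<le> spectral_radius V E"
    using ms inbl' unfolding max_spectral_in_Bl_def by blast
  ultimately show False by simp
qed

lemma diss_keep:
  assumes fin: "finite V" and d: "dissociation_set V E D" and m: "\<forall>u\<in>D. \<forall>w\<in>D. adj E' u w \<longrightarrow> adj E u w"
  shows "dissociation_set V E' D"
  unfolding dissociation_set_def
proof (intro conjI ballI)
  show "D \<subseteq> V" using d unfolding dissociation_set_def by blast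
  fix w assume w: "w \<in> D"
  have "finite D" using d fin finite_subset unfolding dissociation_set_def by blast
  hence "card {u \<in> D. adj E' u w} \<le> card {u \<in> D. adj E u w}" using m w by (intro card_mono) auto
  also have "\<dots> \<le> 1" using d w unfolding dissociation_set_def by blast
  finally show "card {u \<in> D. adj E' u w} \<le> 1" .
qed

lemma edge_block:
  assumes bg: "block_graph V E" and a: "adj E u w"
  shows "\<exists>B. block V E B \<and> u \<in> B \<and> w \<in> B"
proof -
  have fin: "finite V" and sg: "simple_graph V E" using bg_facts[OF bg] by auto
  have uw: "u \<noteq> w \<and> u \<in> V \<and> w \<in> V" using simple_adj[OF sg a] .
  hence "nonsep_on E {u, w}" "{u, w} \<subseteq> V" using edge_nonsep[OF a] by auto
  then obtain B where "block V E B" "{u, w} \<subseteq> B" using nonsep_in_block[OF fin] by blast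
  thus ?thesis by blast
qed

lemma edge_out:
  "(crel E V)\<^sup>*\<^sup>* b y \<Longrightarrow> b \<in> B \<Longrightarrow> y \<notin> B \<Longrightarrow> \<exists>w z. w \<in> B \<and> z \<notin> B \<and> adj E w z \<and> z \<in> V"
proof (induction rule: rtranclp_induct)
  case base thus ?case by simp
next
  case (step c d)
  show ?case
  proof (cases "c \<in> B")
    case True thus ?thesis using step unfolding crel_def by blast
  next
    case False thus ?thesis using step by blast
  qed
qed

lemma NB:
  assumes bg: "block_graph V E" and B: "block V E B" and x: "x \<in> B" and a: "adj E x u" and u: "u \<notin> B"
  shows "cut_vertex_on E V x"
proof -
  have fin: "finite V" and sg: "simple_graph V E" using bg_facts[OF bg] by auto
  have xu: "x \<noteq> u" "x \<in> V" "u \<in> V" using simple_adj[OF sg a] by auto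
  obtain p where p: "p \<in> B" "p \<noteq> x"
  proof (rule ccontr)
    assume "\<not> thesis"
    hence "B = {x}" using x that by blast
    moreover have "nonsep_on E {x, u}" using edge_nonsep[OF a xu(1)] .
    moreover have "{x, u} \<subseteq> V" using xu by auto
    moreover have "B \<subseteq> {x, u}" using \<open>B = {x}\<close> by simp
    ultimately have "{x, u} = B" using B unfolding block_def by (metis (no_types, lifting))
    thus False using u by blast
  qed
  have pV: "p \<in> V" using p block_sub[OF B] by blast
  show ?thesis unfolding cut_vertex_on_def
  proof (intro conjI)
    show "x \<in> V" "V - {x} \<noteq> {}" using xu by auto
    show "\<not> connected_on E (V - {x})"
    proof
      assume "connected_on E (V - {x})"
      hence "(crel E (V - {x}))\<^sup>*\<^sup>* p u" using p pV xu unfolding connected_on_crel by blast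
      then obtain ws where ws: "ws \<noteq> []" "hd ws = p" "last ws = u" "successively (adj E) ws" "set ws \<subseteq> V - {x}"
        using rtranclp_walk[of E "V - {x}" p u] p pV by blast
      obtain ps where ps0: "distinct ps" "successively (adj E) ps" "ps \<noteq> []" "hd ps = hd ws" "last ps = last ws" "set ps \<subseteq> set ws"
        using shorten[OF ws(4) ws(1)] by blast
      hence ps: "distinct ps" "successively (adj E) ps" "ps \<noteq> []" "hd ps = p" "last ps = u" "set ps \<subseteq> set ws"
        using ws(2,3) by auto
      define cs where "cs = ps @ [x]"
      have xn: "x \<notin> set ps" using ps ws by blast
      have dcs: "distinct cs" unfolding cs_def using ps(1) xn by simp
      have ua: "adj E u x" using a adj_sym'[of E x u] by simp
      have scs: "successively (adj E) cs" unfolding cs_def successively_append_iff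
        using ps(2,3,5) ua by simp
      have pxa: "adj E x p" using bg_clique[OF bg block_sub[OF B] block_nonsep[OF B] x p(1)] p(2) by simp
      have wcs: "adj E (last cs) (hd cs)" unfolding cs_def using ps pxa by simp
      have csV: "set cs \<subseteq> V" unfolding cs_def using ps ws xu by auto
      have "hd ps \<in> set ps" using ps(3) by simp
      hence "p \<in> set cs" "x \<in> set cs" unfolding cs_def using ps(4) by auto
      hence "set cs \<subseteq> B" using cyc_block[OF B dcs scs _ wcs csV, of p x] p x by (simp add: cs_def)
      moreover have "last ps \<in> set ps" using ps(3) by simp
      hence "u \<in> set cs" unfolding cs_def using ps(5) by auto
      ultimately show False using u by blast
    qed
  qed
qed

lemma cut_two_blocks:
  assumes bg: "block_graph V E" and cut: "cut_vertex_on E V v"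
  shows "\<exists>B1 B2. block V E B1 \<and> block V E B2 \<and> B1 \<noteq> B2 \<and> v \<in> B1 \<and> v \<in> B2"
proof -
  have fin: "finite V" and sg: "simple_graph V E" and cV: "connected_on E V" using bg_facts[OF bg] by auto
  have vV: "v \<in> V" and ne: "V - {v} \<noteq> {}" and nc: "\<not> connected_on E (V - {v})"
    using cut unfolding cut_vertex_on_def by auto
  obtain y0 where y0: "y0 \<in> V" "y0 \<noteq> v" using ne by blast
  have "(crel E V)\<^sup>*\<^sup>* v y0" using cV vV y0 unfolding connected_on_crel by blast
  then obtain w p where "w \<in> {v}" "p \<notin> {v}" "adj E w p" "p \<in> V" using edge_out[of E V v y0 "{v}"] y0 by blast
  hence vp: "adj E v p" "p \<noteq> v" by auto
  obtain Bp where Bp: "block V E Bp" "v \<in> Bp" "p \<in> Bp" using edge_block[OF bg vp(1)] by blast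
  have "\<exists>q. adj E v q \<and> q \<notin> Bp"
  proof (rule ccontr)
    assume "\<not> ?thesis"
    hence allin: "q \<in> Bp" if "adj E v q" for q using that by blast
    have BpV: "Bp \<subseteq> V" using block_sub[OF Bp(1)] .
    have cBp: "connected_on E (Bp - {v})"
    proof -
      have "Bp - {v} \<noteq> {}" using Bp vp by blast
      thus ?thesis using block_nonsep[OF Bp(1)] Bp(2) unfolding nonsep_iff by blast
    qed
    have key: "(crel E (V - {v}))\<^sup>*\<^sup>* y p" if y: "y \<in> V" "y \<noteq> v" for y
    proof -
      have "(crel E V)\<^sup>*\<^sup>* y v" using cV vV y unfolding connected_on_crel by blast
      then obtain ws where ws: "ws \<noteq> []" "hd ws = y" "last ws = v" "successively (adj E) ws" "set ws \<subseteq> V"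
        using rtranclp_walk[of E V y v] y by blast
      obtain ps where ps0: "distinct ps" "successively (adj E) ps" "ps \<noteq> []" "hd ps = hd ws" "last ps = last ws" "set ps \<subseteq> set ws"
        using shorten[OF ws(4) ws(1)] by blast
      hence ps: "distinct ps" "successively (adj E) ps" "ps \<noteq> []" "hd ps = y" "last ps = v" "set ps \<subseteq> V"
        using ws by auto
      define qs where "qs = butlast ps"
      have pe: "ps = qs @ [v]" unfolding qs_def using ps(3,5) append_butlast_last_id by metis
      have qne: "qs \<noteq> []" proof assume "qs = []" thus False using pe ps(4) y by simp qed
      have sq: "successively (adj E) qs" "adj E (last qs) v"
        using ps(2) qne unfolding pe successively_append_iff by auto
      have vq: "v \<notin> set qs" using ps(1) unfolding pe by simp
      have qV: "set qs \<subseteq> V - {v}" using ps(6) vq unfolding pe by auto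
      have hq: "hd qs = y" using ps(4) qne unfolding pe by simp
      have lq: "last qs \<in> set qs" using qne by simp
      have c1: "(crel E (V - {v}))\<^sup>*\<^sup>* y (last qs)" using walk_conn[OF sq(1) qne qV lq] hq by simp
      have "adj E v (last qs)" using sq(2) adj_sym' by metis
      hence "last qs \<in> Bp" by (rule allin)
      hence "last qs \<in> Bp - {v}" using vq lq by auto
      moreover have "p \<in> Bp - {v}" using Bp vp by auto
      ultimately have "(crel E (Bp - {v}))\<^sup>*\<^sup>* (last qs) p" using cBp unfolding connected_on_crel by blast
      hence "(crel E (V - {v}))\<^sup>*\<^sup>* (last qs) p" using crel_mono[of "Bp - {v}" "V - {v}"] BpV by blast
      with c1 show ?thesis by (rule rtranclp_trans)
    qed
    have "connected_on E (V - {v})" unfolding connected_on_crel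
    proof (intro conjI ballI)
      show "V - {v} \<noteq> {}" by (rule ne)
      fix a b assume "a \<in> V - {v}" "b \<in> V - {v}"
      hence "(crel E (V - {v}))\<^sup>*\<^sup>* a p" "(crel E (V - {v}))\<^sup>*\<^sup>* b p" using key by auto
      thus "(crel E (V - {v}))\<^sup>*\<^sup>* a b" using crel_sym rtranclp_trans by metis
    qed
    thus False using nc by simp
  qed
  then obtain q where q: "adj E v q" "q \<notin> Bp" by blast
  obtain Bq where Bq: "block V E Bq" "v \<in> Bq" "q \<in> Bq" using edge_block[OF bg q(1)] by blast
  have "Bq \<noteq> Bp" using q Bq by blast
  thus ?thesis using Bp Bq by blast
qed

lemma phi_pos:
  assumes fin: "finite V" and ne: "V \<noteq> {}" and sg: "simple_graph V E"
  shows "dissociation_number V E \<ge> 1"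
proof -
  obtain v0 where v0: "v0 \<in> V" using ne by blast
  have e: "{u \<in> {v0}. adj E u v0} = {}" using simple_adj[OF sg] by auto
  have "dissociation_set V E {v0}" unfolding dissociation_set_def
  proof (intro conjI ballI)
    show "{v0} \<subseteq> V" using v0 by simp
    fix w
    have "card {u \<in> {v0}. adj E u w} \<le> card {v0}" by (intro card_mono) auto
    thus "card {u \<in> {v0}. adj E u w} \<le> 1" by simp
  qed
  from dn_ge[OF fin this] show ?thesis by simp
qed

lemma ii_core:
  assumes inbl: "in_Bl k \<phi> V E" and md: "max_dissociation_set V E D"
    and b1: "block V E C1" and b2: "block V E C2" and ne: "C1 \<noteq> C2" and v: "v \<in> C1" "v \<in> C2"
    and c2: "C2 \<inter> D \<subseteq> {v}"
  shows "\<not> max_spectral_in_Bl k \<phi> V E"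
proof -
  have bg: "block_graph V E" using inbl unfolding in_Bl_def by blast
  have fin: "finite V" using bg_facts[OF bg] by blast
  have dD: "dissociation_set V E D" using md unfolding max_dissociation_set_def by blast
  have cl: "adj E p q" if "p \<in> C1" "q \<in> C1" "p \<noteq> q" for p q
    using bg_clique[OF bg block_sub[OF b1] block_nonsep[OF b1] that] .
  have "\<forall>u\<in>D. \<forall>w\<in>D. adj (merge E C1 C2) u w \<longrightarrow> adj E u w"
  proof (intro ballI impI)
    fix u w assume uw: "u \<in> D" "w \<in> D" "adj (merge E C1 C2) u w"
    show "adj E u w"
    proof (cases "adj E u w")
      case False
      hence h: "u \<noteq> w" "u \<in> C1 \<and> w \<in> C2 \<or> w \<in> C1 \<and> u \<in> C2" using uw(3) unfolding adj_merge by auto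
      show ?thesis
      proof (cases "u \<in> C1 \<and> w \<in> C2")
        case True
        hence "w = v" using c2 uw by blast
        thus ?thesis using cl[of u v] True v h by simp
      next
        case False
        hence "w \<in> C1" "u \<in> C2" using h by auto
        hence "u = v" using c2 uw by blast
        thus ?thesis using cl[of v w] \<open>w \<in> C1\<close> v h by simp
      qed
    qed simp
  qed
  hence "dissociation_set V (merge E C1 C2) D" by (rule diss_keep[OF fin dD])
  thus ?thesis by (rule final_merge[OF inbl md b1 b2 ne v])
qed


theorem proposition2p1:
  fixes V :: "'a set" and E :: "'a set set" and D :: "'a set" and k \<phi> :: nat
  assumes "in_Bl k \<phi> V E"
    and "max_dissociation_set V E D"
    and "(\<exists>B. block V E B \<and> card (B \<inter> D) = 0)
         \<or> (\<exists>v\<in>D. cut_vertex_on E V v)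
         \<or> (\<exists>B1 B2. adjacent_blocks V E B1 B2 \<and> card (B1 \<inter> D) = 1 \<and> card (B2 \<inter> D) = 1)"
  shows "\<not> max_spectral_in_Bl k \<phi> V E"
proof -
  note inbl = assms(1) and md = assms(2)
  have bg: "block_graph V E" and ph: "dissociation_number V E = \<phi>" using inbl unfolding in_Bl_def by auto
  have fin: "finite V" and sg: "simple_graph V E" and cV: "connected_on E V" using bg_facts[OF bg] by auto
  have Vne: "V \<noteq> {}" using cV unfolding connected_on_def by blast
  have dD: "dissociation_set V E D" and cD: "card D = \<phi>" using md ph unfolding max_dissociation_set_def by auto
  have DV: "D \<subseteq> V" using dD unfolding dissociation_set_def by blast
  have finD: "finite D" using DV fin finite_subset by blast
  have caseii: "\<not> max_spectral_in_Bl k \<phi> V E" if v: "v \<in> D" "cut_vertex_on E V v" for v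
  proof -
    obtain B1 B2 where B: "block V E B1" "block V E B2" "B1 \<noteq> B2" "v \<in> B1" "v \<in> B2"
      using cut_two_blocks[OF bg v(2)] by blast
    have "B1 \<inter> D \<subseteq> {v} \<or> B2 \<inter> D \<subseteq> {v}"
    proof (rule ccontr)
      assume "\<not> ?thesis"
      then obtain d1 d2 where d: "d1 \<in> B1" "d1 \<in> D" "d1 \<noteq> v" "d2 \<in> B2" "d2 \<in> D" "d2 \<noteq> v" by blast
      have "d1 \<noteq> d2"
      proof
        assume "d1 = d2"
        hence "B1 = B2" using block_two[OF B(1) B(2), of d1 v] d B by simp
        thus False using B by simp
      qed
      moreover have "adj E d1 v" using bg_clique[OF bg block_sub[OF B(1)] block_nonsep[OF B(1)]] d B by blast
      moreover have "adj E d2 v" using bg_clique[OF bg block_sub[OF B(2)] block_nonsep[OF B(2)]] d B by blast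
      ultimately have "{d1, d2} \<subseteq> {u \<in> D. adj E u v}" "card {d1, d2} = 2" using d by auto
      hence "2 \<le> card {u \<in> D. adj E u v}" using card_mono[of "{u \<in> D. adj E u v}" "{d1, d2}"] finD by simp
      moreover have "card {u \<in> D. adj E u v} \<le> 1" using dD v unfolding dissociation_set_def by blast
      ultimately show False by simp
    qed
    thus ?thesis
    proof
      assume "B1 \<inter> D \<subseteq> {v}"
      thus ?thesis using ii_core[OF inbl md B(2) B(1)] B by auto
    next
      assume "B2 \<inter> D \<subseteq> {v}"
      thus ?thesis using ii_core[OF inbl md B(1) B(2)] B by auto
    qed
  qed
  from assms(3) show ?thesis
  proof (elim disjE)
    assume "\<exists>B. block V E B \<and> card (B \<inter> D) = 0"
    then obtain B where B: "block V E B" "card (B \<inter> D) = 0" by blast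
    have BD: "B \<inter> D = {}" using B(2) finD by simp
    have "\<exists>y\<in>V. y \<notin> B"
    proof (rule ccontr)
      assume "\<not> ?thesis"
      hence "D = {}" using DV BD by blast
      hence "\<phi> = 0" using cD by simp
      thus False using phi_pos[OF fin Vne sg] ph by simp
    qed
    then obtain y where y: "y \<in> V" "y \<notin> B" by blast
    obtain b where b: "b \<in> B" using nonsep_ne[OF block_nonsep[OF B(1)]] by blast
    have "(crel E V)\<^sup>*\<^sup>* b y" using cV b y block_sub[OF B(1)] unfolding connected_on_crel by blast
    from edge_out[OF this b y(2)]
    obtain w z where wz: "w \<in> B" "z \<notin> B" "adj E w z" "z \<in> V" by blast
    obtain B' where B': "block V E B'" "w \<in> B'" "z \<in> B'" using edge_block[OF bg wz(3)] by blast
    have ne: "B \<noteq> B'" using wz B' by blast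
    have "\<forall>u\<in>D. \<forall>d\<in>D. adj (merge E B B') u d \<longrightarrow> adj E u d"
    proof (intro ballI impI)
      fix u d assume "u \<in> D" "d \<in> D" "adj (merge E B B') u d"
      moreover have "u \<notin> B" "d \<notin> B" using BD \<open>u \<in> D\<close> \<open>d \<in> D\<close> by auto
      ultimately show "adj E u d" unfolding adj_merge by auto
    qed
    hence "dissociation_set V (merge E B B') D" by (rule diss_keep[OF fin dD])
    thus ?thesis by (rule final_merge[OF inbl md B(1) B'(1) ne wz(1) B'(2)])
  next
    assume "\<exists>v\<in>D. cut_vertex_on E V v"
    thus ?thesis using caseii by blast
  next
    assume "\<exists>B1 B2. adjacent_blocks V E B1 B2 \<and> card (B1 \<inter> D) = 1 \<and> card (B2 \<inter> D) = 1"
    then obtain B1 B2 where ab: "adjacent_blocks V E B1 B2" "card (B1 \<inter> D) = 1" "card (B2 \<inter> D) = 1" by blast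
    show ?thesis
    proof (cases "\<exists>d\<in>D. cut_vertex_on E V d")
      case True thus ?thesis using caseii by blast
    next
      case False
      obtain v where B: "block V E B1" "block V E B2" "B1 \<noteq> B2" "v \<in> B1" "v \<in> B2" "cut_vertex_on E V v"
        using ab(1) unfolding adjacent_blocks_def by blast
      have vD: "v \<notin> D" using False B by blast
      obtain a where a: "B1 \<inter> D = {a}" using ab(2) card_1_singletonE by blast
      obtain b where b: "B2 \<inter> D = {b}" using ab(3) card_1_singletonE by blast
      have aD: "a \<in> D" "a \<in> B1" and bD: "b \<in> D" "b \<in> B2" using a b by auto
      have av: "a \<noteq> v" "b \<noteq> v" using aD bD vD by auto
      have abn: "a \<noteq> b"
      proof
        assume "a = b"
        hence "B1 = B2" using block_two[OF B(1) B(2), of a v] aD bD B av by simp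
        thus False using B by simp
      qed
      have nod: "\<not> adj E u x" if "x \<in> D" "x \<in> C" "C \<inter> D = {x}" "block V E C" "u \<in> D" for x C u
      proof
        assume ux: "adj E u x"
        have xu: "adj E x u" using ux adj_sym'[of E u x] by simp
        show False
        proof (cases "u \<in> C")
          case True
          hence "u = x" using that by blast
          thus False using simple_adj[OF sg ux] by simp
        next
          case False
          hence "cut_vertex_on E V x" using NB[OF bg that(4) that(2) xu] by blast
          thus False using \<open>\<not> (\<exists>d\<in>D. cut_vertex_on E V d)\<close> that(1) by blast
        qed
      qed
      have noa: "\<not> adj E u a" if "u \<in> D" for u using nod[OF aD(1) aD(2) a B(1) that] .
      have nob: "\<not> adj E u b" if "u \<in> D" for u using nod[OF bD(1) bD(2) b B(2) that] .
      define E' where "E' = merge E B1 B2"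
      have new: "u \<in> {a, b} \<and> d \<in> {a, b} \<and> u \<noteq> d"
        if "u \<in> D" "d \<in> D" "adj E' u d" "\<not> adj E u d" for u d
      proof -
        have h: "u \<noteq> d" "u \<in> B1 \<union> B2" "d \<in> B1 \<union> B2" using that(3,4) unfolding E'_def adj_merge by auto
        have "u \<in> (B1 \<inter> D) \<union> (B2 \<inter> D)" "d \<in> (B1 \<inter> D) \<union> (B2 \<inter> D)" using h that(1,2) by auto
        thus ?thesis using a b h by auto
      qed
      have "dissociation_set V E' D" unfolding dissociation_set_def
      proof (intro conjI ballI)
        show "D \<subseteq> V" by (rule DV)
        fix d assume d: "d \<in> D"
        show "card {u \<in> D. adj E' u d} \<le> 1"
        proof (cases "d = a \<or> d = b")
          case True
          then obtain o1 where o1: "{u \<in> D. adj E' u d} \<subseteq> {o1}"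
          proof
            assume "d = a"
            hence "{u \<in> D. adj E' u d} \<subseteq> {b}" using new noa d by blast
            thus ?thesis using that by blast
          next
            assume "d = b"
            hence "{u \<in> D. adj E' u d} \<subseteq> {a}" using new nob d by blast
            thus ?thesis using that by blast
          qed
          have "card {u \<in> D. adj E' u d} \<le> card {o1}" by (rule card_mono[OF _ o1]) simp
          thus ?thesis by simp
        next
          case False
          hence "{u \<in> D. adj E' u d} \<subseteq> {u \<in> D. adj E u d}" using new d by blast
          hence "card {u \<in> D. adj E' u d} \<le> card {u \<in> D. adj E u d}" using finD by (intro card_mono) auto
          also have "\<dots> \<le> 1" using dD d unfolding dissociation_set_def by blast
          finally show ?thesis .
        qed
      qed
      thus ?thesis unfolding E'_def by (rule final_merge[OF inbl md B(1) B(2) B(3) B(4) B(5)])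
    qed
  qed
qed


end
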